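(* Let $\mathfrak A,\mathfrak B\in K_{\overline\alpha}$ with $\mathfrak A\le\mathfrak B$. Assume $(\mathfrak B,\mathfrak C)$ is an essential minimal pair and let $\gamma=-\delta(\mathfrak C/\mathfrak B)$. Then: (1) there is $\mathfrak D\in K_{\overline\alpha}$ with $\mathfrak B\subseteq\mathfrak D$, $\mathfrak A\le\mathfrak D$ and $0\le\delta(\mathfrak D/\mathfrak A)<\gamma$, such that moreover, for every minimal pair $(\mathfrak B,\mathfrak G)$ with $|G|<|C|$, $\mathfrak G$ does not embed into $\mathfrak D$ over $\mathfrak B$; (2) if $\delta(\mathfrak A)\ge\gamma$, then there is $\mathfrak D\in K_{\overline\alpha}$ with $\mathfrak B\subseteq\mathfrak D$ such that $(\mathfrak A,\mathfrak D)$ is an essential minimal pair satisfying $0>\delta(\mathfrak D/\mathfrak A)\ge-\gamma$.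
   Context: Fix a finite relational language $L$ in which every relation symbol has arity at least $2$. $K_L$ is the class of all finite $L$-structures (including the empty one) in which every relation symbol is interpreted symmetrically and irreflexively. Fix $\overline\alpha:L\to(0,1]$, writing $\overline\alpha_E=\overline\alpha(E)$, such that it is not the case that all symbols of $L$ are binary and $\overline\alpha_E=1$ for all $E$. For $\mathfrak A\in K_L$ let $N_E(\mathfrak A)$ be the number of subsets of $A$ on which $E$ holds and $\delta(\mathfrak A)=|A|-\sum_{E}\overline\alpha_E N_E(\mathfrak A)$. $K_{\overline\alpha}=\{\mathfrak A\in K_L:\delta(\mathfrak A')\ge0\text{ for all substructures }\mathfrak A'\subseteq\mathfrak A\}$. Subsets are identified with induced substructures; for substructures $X,Y$ of a common structure, $\delta(X/Y)=\delta(X\cup Y)-\delta(Y)$. For $\mathfrak A\subseteq\mathfrak B$, $\mathfrak A\le\mathfrak B$ means $\delta(\mathfrak A)\le\delta(\mathfrak A')$ for all $\mathfrak A\subseteq\mathfrak A'\subseteq\mathfrak B$; $(\mathfrak A,\mathfrak B)$ is a minimal pair if $\mathfrak A\subseteq\mathfrak B$, $\mathfrak A\le\mathfrak C$ for all $\mathfrak A\subseteq\mathfrak C\subsetneq\mathfrak B$, but $\mathfrak A\not\le\mathfrak B$. For $\mathfrak B\in K_{\overline\alpha}$ with $\delta(\mathfrak B)>0$, a structure $\mathfrak D\in K_{\overline\alpha}$ with $\mathfrak B\subseteq\mathfrak D$ forms an essential minimal pair $(\mathfrak B,\mathfrak D)$ if $(\mathfrak B,\mathfrak D)$ is a minimal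 pair and $\delta(\mathfrak D'/\mathfrak D'\cap\mathfrak B)\ge0$ for every substructure $\mathfrak D'\subsetneq\mathfrak D$. *)

theory Defs
  imports Complex_Main
begin

text \<open>A finite L-structure with symmetric irreflexive relations: a universe together with,
for each relation symbol E, the set of (arity E)-element subsets of the universe on which E holds.\<close>

type_synonym ('a, 'l) struct = "'a set \<times> ('l \<Rightarrow> 'a set set)"

definition univ :: "('a, 'l) struct \<Rightarrow> 'a set" where
  "univ M = fst M"

definition rel :: "('a, 'l) struct \<Rightarrow> 'l \<Rightarrow> 'a set set" where
  "rel M = snd M"

definition in_KL :: "('l \<Rightarrow> nat) \<Rightarrow> ('a, 'l) struct \<Rightarrow> bool" where
  "in_KL ar M \<longleftrightarrow> finite (univ M) \<and>
     (\<forall>E. rel M E \<subseteq> {S. S \<subseteq> univ M \<and> card S = ar E})"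

definition induced :: "('a, 'l) struct \<Rightarrow> 'a set \<Rightarrow> ('a, 'l) struct" where
  "induced M X = (X, \<lambda>E. {S \<in> rel M E. S \<subseteq> X})"

definition substr :: "('a, 'l) struct \<Rightarrow> ('a, 'l) struct \<Rightarrow> bool" where
  "substr N M \<longleftrightarrow> univ N \<subseteq> univ M \<and> N = induced M (univ N)"

definition N_E :: "('a, 'l) struct \<Rightarrow> 'l \<Rightarrow> nat" where
  "N_E M E = card (rel M E)"

definition delta :: "('l::finite \<Rightarrow> real) \<Rightarrow> ('a, 'l) struct \<Rightarrow> real" where
  "delta \<alpha> M = real (card (univ M)) - (\<Sum>E\<in>UNIV. \<alpha> E * real (N_E M E))"

definition delta_rel :: "('l::finite \<Rightarrow> real) \<Rightarrow> ('a, 'l) struct \<Rightarrow> 'a set \<Rightarrow> 'a set \<Rightarrow> real" where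
  "delta_rel \<alpha> M X Y = delta \<alpha> (induced M (X \<union> Y)) - delta \<alpha> (induced M Y)"

definition in_K_alpha :: "('l \<Rightarrow> nat) \<Rightarrow> ('l::finite \<Rightarrow> real) \<Rightarrow> ('a, 'l) struct \<Rightarrow> bool" where
  "in_K_alpha ar \<alpha> M \<longleftrightarrow> in_KL ar M \<and> (\<forall>X \<subseteq> univ M. delta \<alpha> (induced M X) \<ge> 0)"

definition strong :: "('l::finite \<Rightarrow> real) \<Rightarrow> ('a, 'l) struct \<Rightarrow> ('a, 'l) struct \<Rightarrow> bool" where
  "strong \<alpha> A B \<longleftrightarrow> substr A B \<and>
     (\<forall>X. univ A \<subseteq> X \<and> X \<subseteq> univ B \<longrightarrow> delta \<alpha> A \<le> delta \<alpha> (induced B X))"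

definition minimal_pair :: "('l::finite \<Rightarrow> real) \<Rightarrow> ('a, 'l) struct \<Rightarrow> ('a, 'l) struct \<Rightarrow> bool" where
  "minimal_pair \<alpha> A B \<longleftrightarrow> substr A B \<and>
     (\<forall>X. univ A \<subseteq> X \<and> X \<subset> univ B \<longrightarrow> strong \<alpha> A (induced B X)) \<and>
     \<not> strong \<alpha> A B"

definition essential_minimal_pair ::
  "('l \<Rightarrow> nat) \<Rightarrow> ('l::finite \<Rightarrow> real) \<Rightarrow> ('a, 'l) struct \<Rightarrow> ('a, 'l) struct \<Rightarrow> bool" where
  "essential_minimal_pair ar \<alpha> B D \<longleftrightarrow>
     in_K_alpha ar \<alpha> B \<and> delta \<alpha> B > 0 \<and> in_K_alpha ar \<alpha> D \<and> substr B D \<and>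
     minimal_pair \<alpha> B D \<and>
     (\<forall>X. X \<subset> univ D \<longrightarrow> delta_rel \<alpha> D X (X \<inter> univ B) \<ge> 0)"

definition embeds_over ::
  "('l \<Rightarrow> nat) \<Rightarrow> ('a, 'l) struct \<Rightarrow> ('a, 'l) struct \<Rightarrow> ('a, 'l) struct \<Rightarrow> bool" where
  "embeds_over ar B G D \<longleftrightarrow> (\<exists>f. inj_on f (univ G) \<and> f ` univ G \<subseteq> univ D \<and>
     (\<forall>b\<in>univ B. f b = b) \<and>
     (\<forall>E S. S \<subseteq> univ G \<and> card S = ar E \<longrightarrow> (S \<in> rel G E \<longleftrightarrow> f ` S \<in> rel D E)))"

end

theory Submission
  imports Defs
begin

lemma univ_induced[simp]: "univ (induced M X) = X" by (simp add: univ_def induced_def)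
lemma rel_induced[simp]: "rel (induced M X) E = {S \<in> rel M E. S \<subseteq> X}" by (simp add: rel_def induced_def)

lemma struct_eq: "univ M = univ N \<Longrightarrow> (\<And>E. rel M E = rel N E) \<Longrightarrow> M = N"
  by (cases M, cases N) (auto simp: univ_def rel_def)

lemma induced_induced: "Y \<subseteq> X \<Longrightarrow> induced (induced M X) Y = induced M Y"
  by (rule struct_eq) auto

lemma induced_univ: "(\<And>E. rel M E \<subseteq> Pow (univ M)) \<Longrightarrow> induced M (univ M) = M"
  by (rule struct_eq) auto

lemma KL_rel: "in_KL ar M \<Longrightarrow> rel M E \<subseteq> Pow (univ M)"
  unfolding in_KL_def by blast

lemma KL_induced_univ: "in_KL ar M \<Longrightarrow> induced M (univ M) = M"
  using induced_univ KL_rel by metis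

lemma substr_ind:
  assumes "substr B M" "Z \<subseteq> univ B" shows "induced M Z = induced B Z"
proof -
  have "B = induced M (univ B)" using assms(1) by (simp add: substr_def)
  then have "induced B Z = induced (induced M (univ B)) Z" by (rule arg_cong)
  also have "\<dots> = induced M Z" by (rule induced_induced[OF assms(2)])
  finally show ?thesis by simp
qed

lemma substr_trans:
  assumes "substr A B" "substr B M" shows "substr A M"
proof -
  have 1: "univ A \<subseteq> univ B" "A = induced B (univ A)" using assms(1) by (simp_all add: substr_def)
  have 2: "univ B \<subseteq> univ M" using assms(2) by (simp add: substr_def)
  have "induced B (univ A) = induced M (univ A)" using substr_ind[OF assms(2) 1(1)] by simp
  then show ?thesis unfolding substr_def using 1 2 by auto
qed

lemma substr_refl_KL: "in_KL ar M \<Longrightarrow> substr M M"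
  unfolding substr_def by (simp add: KL_induced_univ)

lemma delta_induced: "delta \<alpha> (induced M X) = real (card X) - (\<Sum>E\<in>UNIV. \<alpha> E * real (card {S \<in> rel M E. S \<subseteq> X}))"
  by (simp add: delta_def N_E_def)

lemma delta_split:
  assumes fin: "finite X" and XUV: "X \<subseteq> U \<union> V"
    and R: "\<And>E S. S \<in> rel M E \<Longrightarrow> S \<subseteq> X \<Longrightarrow> S \<subseteq> U \<or> S \<subseteq> V"
  shows "delta \<alpha> (induced M X) = delta \<alpha> (induced M (X\<inter>U)) + delta \<alpha> (induced M (X\<inter>V)) - delta \<alpha> (induced M (X\<inter>U\<inter>V))"
proof -
  have c0: "card (X\<inter>U) + card (X\<inter>V) = card ((X\<inter>U) \<union> (X\<inter>V)) + card ((X\<inter>U) \<inter> (X\<inter>V))"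
    by (rule card_Un_Int) (use fin in auto)
  have "(X\<inter>U) \<union> (X\<inter>V) = X" "(X\<inter>U) \<inter> (X\<inter>V) = X\<inter>U\<inter>V" using XUV by auto
  with c0 have c: "real (card X) = real (card (X\<inter>U)) + real (card (X\<inter>V)) - real (card (X\<inter>U\<inter>V))"
    by simp
  have r: "real (card {S \<in> rel M E. S \<subseteq> X}) = real (card {S \<in> rel M E. S \<subseteq> X\<inter>U}) + real (card {S \<in> rel M E. S \<subseteq> X\<inter>V}) - real (card {S \<in> rel M E. S \<subseteq> X\<inter>U\<inter>V})" for E
  proof -
    let ?P = "{S \<in> rel M E. S \<subseteq> X\<inter>U}" and ?Q = "{S \<in> rel M E. S \<subseteq> X\<inter>V}"
    have fP: "finite ?P" by (rule finite_subset[of _ "Pow X"]) (use fin in auto)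
    have fQ: "finite ?Q" by (rule finite_subset[of _ "Pow X"]) (use fin in auto)
    have "card ?P + card ?Q = card (?P \<union> ?Q) + card (?P \<inter> ?Q)" by (rule card_Un_Int[OF fP fQ])
    moreover have "?P \<union> ?Q = {S \<in> rel M E. S \<subseteq> X}" using R by auto
    moreover have "?P \<inter> ?Q = {S \<in> rel M E. S \<subseteq> X\<inter>U\<inter>V}" by auto
    ultimately show ?thesis by simp
  qed
  show ?thesis
    unfolding delta_induced c r
    by (simp add: algebra_simps sum.distrib sum_subtractf)
qed

lemma submod:
  assumes a: "\<And>E. \<alpha> E \<ge> 0" and fZ: "finite Z" and fA: "finite A"
  shows "delta \<alpha> (induced M (Z\<union>A)) + delta \<alpha> (induced M (Z\<inter>A)) \<le> delta \<alpha> (induced M Z) + delta \<alpha> (induced M A)"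
proof -
  have c: "card Z + card A = card (Z \<union> A) + card (Z \<inter> A)" by (rule card_Un_Int[OF fZ fA])
  have r: "real (card {S \<in> rel M E. S \<subseteq> Z}) + real (card {S \<in> rel M E. S \<subseteq> A}) \<le> real (card {S \<in> rel M E. S \<subseteq> Z \<union> A}) + real (card {S \<in> rel M E. S \<subseteq> Z\<inter>A})" for E
  proof -
    let ?P = "{S \<in> rel M E. S \<subseteq> Z}" and ?Q = "{S \<in> rel M E. S \<subseteq> A}"
    have fP: "finite ?P" by (rule finite_subset[of _ "Pow Z"]) (use fZ in auto)
    have fQ: "finite ?Q" by (rule finite_subset[of _ "Pow A"]) (use fA in auto)
    have fU: "finite {S \<in> rel M E. S \<subseteq> Z \<union> A}" by (rule finite_subset[of _ "Pow (Z \<union> A)"]) (use fZ fA in auto)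
    have e1: "card ?P + card ?Q = card (?P \<union> ?Q) + card (?P \<inter> ?Q)" by (rule card_Un_Int[OF fP fQ])
    have e2: "card (?P \<union> ?Q) \<le> card {S \<in> rel M E. S \<subseteq> Z \<union> A}" by (rule card_mono[OF fU]) auto
    have e3: "?P \<inter> ?Q = {S \<in> rel M E. S \<subseteq> Z\<inter>A}" by auto
    have "card ?P + card ?Q \<le> card {S \<in> rel M E. S \<subseteq> Z \<union> A} + card {S \<in> rel M E. S \<subseteq> Z\<inter>A}" unfolding e3[symmetric] e1 using e2 by simp
    then show ?thesis by (simp only: of_nat_add[symmetric] of_nat_le_iff)
  qed
  have s: "(\<Sum>E\<in>UNIV. \<alpha> E * real (card {S \<in> rel M E. S \<subseteq> Z})) + (\<Sum>E\<in>UNIV. \<alpha> E * real (card {S \<in> rel M E. S \<subseteq> A}))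
     \<le> (\<Sum>E\<in>UNIV. \<alpha> E * real (card {S \<in> rel M E. S \<subseteq> Z \<union> A})) + (\<Sum>E\<in>UNIV. \<alpha> E * real (card {S \<in> rel M E. S \<subseteq> Z\<inter>A}))"
    unfolding sum.distrib[symmetric] distrib_left[symmetric]
    by (rule sum_mono) (use a r in \<open>simp add: mult_left_mono\<close>)
  show ?thesis unfolding delta_induced using c s by simp
qed

lemma iso_delta:
  assumes inj: "inj_on g U" and YU: "Y \<subseteq> U" and RU: "\<And>E. {S\<in>rel M E. S \<subseteq> Y} \<subseteq> Pow U"
    and eq: "\<And>E. {S\<in>rel M' E. S \<subseteq> g`Y} = (`) g ` {S\<in>rel M E. S \<subseteq> Y}"
  shows "delta \<alpha> (induced M' (g`Y)) = delta \<alpha> (induced M Y)"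
proof -
  have "card (g`Y) = card Y" using inj YU by (meson card_image inj_on_subset)
  moreover have "card {S\<in>rel M' E. S \<subseteq> g`Y} = card {S\<in>rel M E. S \<subseteq> Y}" for E
    unfolding eq by (rule card_image, rule inj_on_subset[OF inj_on_image_Pow[OF inj] RU])
  ultimately show ?thesis unfolding delta_induced by simp
qed

lemma fresh_map:
  fixes Bs Cs U :: "'a set"
  assumes inf: "infinite (UNIV::'a set)" and "Bs \<subseteq> Cs" "Bs \<subseteq> U" "finite Cs" "finite U"
  shows "\<exists>g. inj_on g Cs \<and> (\<forall>b\<in>Bs. g b = b) \<and> g ` Cs \<inter> U = Bs"
proof -
  have "infinite (- U)" using inf assms(5) by (simp add: Compl_eq_Diff_UNIV Diff_infinite_finite)
  then obtain T where T: "T \<subseteq> - U" "finite T" "card T = card (Cs - Bs)"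
    using infinite_arbitrarily_large by blast
  obtain h where h: "bij_betw h (Cs - Bs) T"
    using finite_same_card_bij[of "Cs - Bs" T] T assms(4) by auto
  define g where "g x = (if x \<in> Bs then x else h x)" for x
  have hT: "h ` (Cs - Bs) = T" using h by (simp add: bij_betw_def)
  have hinj: "inj_on h (Cs - Bs)" using h by (simp add: bij_betw_def)
  have hU: "h x \<notin> U" if "x \<in> Cs - Bs" for x using hT T(1) that by blast
  have "inj_on g Cs"
  proof (rule inj_onI)
    fix x y assume xy: "x \<in> Cs" "y \<in> Cs" "g x = g y"
    show "x = y"
    proof (cases "x \<in> Bs")
      case True
      then have gx: "g x = x" by (simp add: g_def)
      show ?thesis
      proof (cases "y \<in> Bs")
        case True then show ?thesis using gx xy by (simp add: g_def)
      next
        case False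
        then have "g y \<notin> U" using hU xy(2) by (simp add: g_def)
        moreover have "g x \<in> U" using gx True assms(3) by auto
        ultimately show ?thesis using xy by simp
      qed
    next
      case False
      then have gx: "g x \<notin> U" using hU xy(1) by (simp add: g_def)
      show ?thesis
      proof (cases "y \<in> Bs")
        case True
        then have "g y \<in> U" using assms(3) by (auto simp: g_def)
        then show ?thesis using gx xy by simp
      next
        case F2: False
        then have "h x = h y" using False xy by (simp add: g_def)
        then show ?thesis using hinj False F2 xy unfolding inj_on_def by blast
      qed
    qed
  qed
  moreover have "g ` Cs \<inter> U = Bs"
  proof (intro equalityI subsetI)
    fix z assume "z \<in> g ` Cs \<inter> U"
    then obtain x where x: "x \<in> Cs" "z = g x" "z \<in> U" by blast
    show "z \<in> Bs"
    proof (cases "x \<in> Bs")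
      case True then show ?thesis using x by (simp add: g_def)
    next
      case False then show ?thesis using x hU by (simp add: g_def)
    qed
  next
    fix z assume "z \<in> Bs"
    then have "g z = z" "z \<in> Cs" "z \<in> U" using assms(2,3) by (auto simp: g_def)
    then show "z \<in> g ` Cs \<inter> U" by (metis IntI imageI)
  qed
  moreover have "\<forall>b\<in>Bs. g b = b" by (simp add: g_def)
  ultimately show ?thesis by blast
qed

lemma substr_rel: "substr B M \<Longrightarrow> rel B E = {S \<in> rel M E. S \<subseteq> univ B}"
  unfolding substr_def by (metis rel_induced)

lemma substr_univ: "substr B M \<Longrightarrow> univ B \<subseteq> univ M"
  unfolding substr_def by blast

lemma KL_fin: "in_KL ar M \<Longrightarrow> finite (univ M)" unfolding in_KL_def by blast

lemma KL_card: "in_KL ar M \<Longrightarrow> S \<in> rel M E \<Longrightarrow> card S = ar E" unfolding in_KL_def by blast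

lemma amalg_step:
  fixes ar :: "'l::finite \<Rightarrow> nat" and \<alpha> :: "'l \<Rightarrow> real" and B C D :: "('a,'l) struct"
  assumes KC: "in_KL ar C" and BC: "substr B C" and KD: "in_KL ar D" and BD: "substr B D"
    and ginj: "inj_on g (univ C)" and gB: "\<forall>b\<in>univ B. g b = b" and gD: "g ` univ C \<inter> univ D = univ B"
  defines "D' \<equiv> (univ D \<union> g ` univ C, \<lambda>E. rel D E \<union> (`) g ` rel C E) :: ('a,'l) struct"
  shows "in_KL ar D'" "univ D' = univ D \<union> g ` univ C"
    "\<And>Z. Z \<subseteq> univ D \<Longrightarrow> induced D' Z = induced D Z"
    "\<And>X. X \<subseteq> univ D' \<Longrightarrow> delta \<alpha> (induced D' X) = delta \<alpha> (induced D (X \<inter> univ D))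
        + delta \<alpha> (induced C (univ C \<inter> g -` X)) - delta \<alpha> (induced D (X \<inter> univ B))"
proof -
  show uD': "univ D' = univ D \<union> g ` univ C" by (simp add: D'_def univ_def)
  have rD': "rel D' E = rel D E \<union> (`) g ` rel C E" for E by (simp add: D'_def rel_def)
  have BsC: "univ B \<subseteq> univ C" using BC by (rule substr_univ)
  have BsD: "univ B \<subseteq> univ D" using BD by (rule substr_univ)
  have rBC: "rel B E = {S \<in> rel C E. S \<subseteq> univ B}" for E using BC by (rule substr_rel)
  have rBD: "rel B E = {S \<in> rel D E. S \<subseteq> univ B}" for E using BD by (rule substr_rel)
  have finC: "finite (univ C)" using KC by (rule KL_fin)
  have finD: "finite (univ D)" using KD by (rule KL_fin)
  have rC: "rel C E \<subseteq> Pow (univ C)" for E using KC by (rule KL_rel)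
  have rD: "rel D E \<subseteq> Pow (univ D)" for E using KD by (rule KL_rel)
  have gx: "g x = x \<and> x \<in> univ B" if "x \<in> univ C" "g x \<in> univ D" for x
  proof -
    have gxB: "g x \<in> univ B" using that gD by blast
    then have "g (g x) = g x" using gB by blast
    moreover have "g x \<in> univ C" using gxB BsC by blast
    ultimately have "g x = x" using ginj that(1) unfolding inj_on_def by blast
    then show ?thesis using gxB by simp
  qed
  have key: "S \<subseteq> univ B \<and> g ` S = S" if "S \<in> rel C E" "g ` S \<subseteq> univ D" for S E
  proof -
    have "S \<subseteq> univ C" using that(1) rC by blast
    then have "S \<subseteq> univ B" using gx that(2) by blast
    moreover then have "g ` S = S" using gB by (force simp: image_iff)
    ultimately show ?thesis by blast
  qed
  show "in_KL ar D'"
    unfolding in_KL_def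
  proof (intro conjI allI)
    show "finite (univ D')" using uD' finC finD by simp
    fix E
    show "rel D' E \<subseteq> {S. S \<subseteq> univ D' \<and> card S = ar E}"
    proof
      fix S assume "S \<in> rel D' E"
      then consider "S \<in> rel D E" | T where "T \<in> rel C E" "S = g ` T" using rD' by blast
      then show "S \<in> {S. S \<subseteq> univ D' \<and> card S = ar E}"
      proof cases
        case 1 then show ?thesis using KD uD' unfolding in_KL_def by blast
      next
        case 2
        have "T \<subseteq> univ C" using 2 rC by blast
        then have "card S = card T" using 2 ginj by (simp add: card_image inj_on_subset)
        then show ?thesis using 2 KL_card[OF KC] uD' \<open>T \<subseteq> univ C\<close> by auto
      qed
    qed
  qed
  show indD: "induced D' Z = induced D Z" if "Z \<subseteq> univ D" for Z
  proof (rule struct_eq)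
    show "univ (induced D' Z) = univ (induced D Z)" by simp
    fix E
    show "rel (induced D' Z) E = rel (induced D Z) E"
    proof (simp only: rel_induced rD', intro equalityI subsetI)
      fix S assume S: "S \<in> {S \<in> rel D E \<union> (`) g ` rel C E. S \<subseteq> Z}"
      show "S \<in> {S \<in> rel D E. S \<subseteq> Z}"
      proof (cases "S \<in> rel D E")
        case True then show ?thesis using S by blast
      next
        case False
        then obtain T where T: "T \<in> rel C E" "S = g ` T" using S by blast
        have "g ` T \<subseteq> univ D" using S T that by blast
        then have "T \<subseteq> univ B \<and> g ` T = T" by (rule key[OF T(1)])
        then have "T \<in> rel D E" using rBC rBD T by blast
        then show ?thesis using S T \<open>T \<subseteq> univ B \<and> g ` T = T\<close> by auto
      qed
    qed auto
  qed
  fix X assume XD': "X \<subseteq> univ D'"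
  let ?U = "univ D" and ?V = "g ` univ C" and ?Y = "univ C \<inter> g -` X"
  have spl: "delta \<alpha> (induced D' X) = delta \<alpha> (induced D' (X\<inter>?U)) + delta \<alpha> (induced D' (X\<inter>?V)) - delta \<alpha> (induced D' (X\<inter>?U\<inter>?V))"
  proof (rule delta_split)
    show "finite X" using XD' uD' finC finD by (metis finite_Un finite_imageI finite_subset)
    show "X \<subseteq> ?U \<union> ?V" using XD' uD' by simp
    fix E S assume "S \<in> rel D' E"
    then show "S \<subseteq> ?U \<or> S \<subseteq> ?V" using rD' rD rC by blast
  qed
  have e1: "induced D' (X\<inter>?U) = induced D (X\<inter>?U)" by (rule indD) blast
  have UV: "X\<inter>?U\<inter>?V = X \<inter> univ B" using gD by blast
  have e3: "induced D' (X\<inter>?U\<inter>?V) = induced D (X \<inter> univ B)" unfolding UV by (rule indD) (use BsD in blast)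
  have XV: "X\<inter>?V = g ` ?Y" by blast
  have e2: "delta \<alpha> (induced D' (g ` ?Y)) = delta \<alpha> (induced C ?Y)"
  proof (rule iso_delta[OF ginj])
    show "?Y \<subseteq> univ C" by blast
    fix E
    show "{S \<in> rel C E. S \<subseteq> ?Y} \<subseteq> Pow (univ C)" using rC by blast
    show "{S \<in> rel D' E. S \<subseteq> g ` ?Y} = (`) g ` {S \<in> rel C E. S \<subseteq> ?Y}"
    proof (intro equalityI subsetI)
      fix S assume S: "S \<in> {S \<in> rel D' E. S \<subseteq> g ` ?Y}"
      show "S \<in> (`) g ` {S \<in> rel C E. S \<subseteq> ?Y}"
      proof (cases "S \<in> rel D E")
        case True
        then have "S \<subseteq> ?U" using rD by blast
        moreover have "S \<subseteq> ?V" using S by blast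
        ultimately have SB: "S \<subseteq> univ B" using gD by blast
        then have SC: "S \<in> rel C E" using rBC rBD True by blast
        have gS: "g ` S = S" using SB gB by (force simp: image_iff)
        have "S \<subseteq> ?Y"
        proof
          fix x assume x: "x \<in> S"
          then obtain y where y: "y \<in> ?Y" "x = g y" using S by blast
          have "x \<in> univ C" using x SB BsC by blast
          moreover have "g x = x" using x SB gB by blast
          ultimately show "x \<in> ?Y" using y by auto
        qed
        then show ?thesis using SC gS by (metis (mono_tags, lifting) image_eqI mem_Collect_eq)
      next
        case False
        then obtain T where T: "T \<in> rel C E" "S = g ` T" using S rD' by blast
        have TC: "T \<subseteq> univ C" using T rC by blast
        have "T \<subseteq> ?Y"
        proof
          fix x assume "x \<in> T"
          then have "g x \<in> g ` ?Y" using S T by blast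
          then show "x \<in> ?Y" using inj_on_image_mem_iff[OF ginj] TC \<open>x \<in> T\<close> by blast
        qed
        then show ?thesis using T by blast
      qed
    next
      fix S assume "S \<in> (`) g ` {S \<in> rel C E. S \<subseteq> ?Y}"
      then show "S \<in> {S \<in> rel D' E. S \<subseteq> g ` ?Y}" using rD' by blast
    qed
  qed
  show "delta \<alpha> (induced D' X) = delta \<alpha> (induced D (X \<inter> univ D))
        + delta \<alpha> (induced C (univ C \<inter> g -` X)) - delta \<alpha> (induced D (X \<inter> univ B))"
    using spl e1 e3 e2 XV by simp
qed

definition Inv :: "('l \<Rightarrow> nat) \<Rightarrow> ('l::finite \<Rightarrow> real) \<Rightarrow> ('a, 'l) struct \<Rightarrow> ('a, 'l) struct \<Rightarrow> real \<Rightarrow> nat \<Rightarrow> ('a, 'l) struct \<Rightarrow> bool" where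
  "Inv ar \<alpha> B C \<gamma> n D \<longleftrightarrow> in_KL ar D \<and> substr B D \<and> delta \<alpha> D = delta \<alpha> B - real n * \<gamma> \<and>
   (\<forall>X. univ B \<subseteq> X \<and> X \<subseteq> univ D \<longrightarrow> delta \<alpha> (induced D X) \<ge> delta \<alpha> B - real n * \<gamma>) \<and>
   (\<forall>X. univ B \<subseteq> X \<and> X \<subset> univ D \<longrightarrow> delta \<alpha> (induced D X) \<ge> delta \<alpha> B - (real n - 1) * \<gamma>) \<and>
   (\<forall>X. X \<subseteq> univ D \<and> \<not> univ B \<subseteq> X \<longrightarrow> delta \<alpha> (induced D X) \<ge> delta \<alpha> (induced D (X \<inter> univ B))) \<and>
   (\<forall>X. univ B \<subseteq> X \<and> X \<subseteq> univ D \<and> delta \<alpha> (induced D X) < delta \<alpha> B \<longrightarrow> card (univ C) \<le> card X)"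

lemma amalg_inv:
  fixes ar :: "'l::finite \<Rightarrow> nat" and \<alpha> :: "'l \<Rightarrow> real" and B C :: "('a,'l) struct" and \<gamma> :: real
  assumes inf: "infinite (UNIV::'a set)" and KB: "in_KL ar B" and KC: "in_KL ar C" and BC: "substr B C"
    and gpos: "\<gamma> > 0"
    and P2: "\<And>Y. univ B \<subseteq> Y \<Longrightarrow> Y \<subset> univ C \<Longrightarrow> delta \<alpha> (induced C Y) \<ge> delta \<alpha> B"
    and P3: "delta \<alpha> C = delta \<alpha> B - \<gamma>"
    and P4: "\<And>Y. Y \<subset> univ C \<Longrightarrow> delta \<alpha> (induced C Y) \<ge> delta \<alpha> (induced C (Y \<inter> univ B))"
  shows "\<exists>D. Inv ar \<alpha> B C \<gamma> n D"
proof (induction n)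
  case 0
  have iB: "induced B (univ B) = B" using KB by (rule KL_induced_univ)
  have h1: "\<forall>X. univ B \<subseteq> X \<and> X \<subseteq> univ B \<longrightarrow> delta \<alpha> (induced B X) \<ge> delta \<alpha> B - real 0 * \<gamma>"
  proof (intro allI impI)
    fix X assume "univ B \<subseteq> X \<and> X \<subseteq> univ B"
    then have "X = univ B" by blast
    then show "delta \<alpha> (induced B X) \<ge> delta \<alpha> B - real 0 * \<gamma>" using iB by simp
  qed
  have h2: "\<forall>X. univ B \<subseteq> X \<and> X \<subset> univ B \<longrightarrow> delta \<alpha> (induced B X) \<ge> delta \<alpha> B - (real 0 - 1) * \<gamma>"
    by blast
  have h3: "\<forall>X. X \<subseteq> univ B \<and> \<not> univ B \<subseteq> X \<longrightarrow> delta \<alpha> (induced B X) \<ge> delta \<alpha> (induced B (X \<inter> univ B))"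
  proof (intro allI impI)
    fix X assume "X \<subseteq> univ B \<and> \<not> univ B \<subseteq> X"
    then have "X \<inter> univ B = X" by blast
    then show "delta \<alpha> (induced B X) \<ge> delta \<alpha> (induced B (X \<inter> univ B))" by simp
  qed
  have h4: "\<forall>X. univ B \<subseteq> X \<and> X \<subseteq> univ B \<and> delta \<alpha> (induced B X) < delta \<alpha> B \<longrightarrow> card (univ C) \<le> card X"
  proof (intro allI impI)
    fix X assume a: "univ B \<subseteq> X \<and> X \<subseteq> univ B \<and> delta \<alpha> (induced B X) < delta \<alpha> B"
    then have "X = univ B" by blast
    then show "card (univ C) \<le> card X" using a iB by simp
  qed
  show ?case unfolding Inv_def
    by (rule exI[of _ B]) (use KB substr_refl_KL[OF KB] h1 h2 h3 h4 in simp)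
next
  case (Suc n)
  then obtain D where Di: "Inv ar \<alpha> B C \<gamma> n D" by blast
  note Dc = Di[unfolded Inv_def]
  have KD: "in_KL ar D" by (rule Dc[THEN conjunct1])
  have BD: "substr B D" by (rule Dc[THEN conjunct2, THEN conjunct1])
  have dD: "delta \<alpha> D = delta \<alpha> B - real n * \<gamma>" by (rule Dc[THEN conjunct2, THEN conjunct2, THEN conjunct1])
  note Dc4 = Dc[THEN conjunct2, THEN conjunct2, THEN conjunct2]
  have Da: "\<And>X. univ B \<subseteq> X \<Longrightarrow> X \<subseteq> univ D \<Longrightarrow> delta \<alpha> (induced D X) \<ge> delta \<alpha> B - real n * \<gamma>"
    using Dc4[THEN conjunct1] by blast
  have Da': "\<And>X. univ B \<subseteq> X \<Longrightarrow> X \<subset> univ D \<Longrightarrow> delta \<alpha> (induced D X) \<ge> delta \<alpha> B - (real n - 1) * \<gamma>"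
    using Dc4[THEN conjunct2, THEN conjunct1] by blast
  have Db: "\<And>X. X \<subseteq> univ D \<Longrightarrow> \<not> univ B \<subseteq> X \<Longrightarrow> delta \<alpha> (induced D X) \<ge> delta \<alpha> (induced D (X \<inter> univ B))"
    using Dc4[THEN conjunct2, THEN conjunct2, THEN conjunct1] by blast
  have Dd: "\<And>X. univ B \<subseteq> X \<Longrightarrow> X \<subseteq> univ D \<Longrightarrow> delta \<alpha> (induced D X) < delta \<alpha> B \<Longrightarrow> card (univ C) \<le> card X"
    using Dc4[THEN conjunct2, THEN conjunct2, THEN conjunct2] by blast
  have BsC: "univ B \<subseteq> univ C" using BC by (rule substr_univ)
  have BsD: "univ B \<subseteq> univ D" using BD by (rule substr_univ)
  obtain g where ginj: "inj_on g (univ C)" and gB: "\<forall>b\<in>univ B. g b = b" and gD: "g ` univ C \<inter> univ D = univ B"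
    using fresh_map[OF inf BsC BsD KL_fin[OF KC] KL_fin[OF KD]] by blast
  define D' where "D' \<equiv> (univ D \<union> g ` univ C, \<lambda>E. rel D E \<union> (`) g ` rel C E) :: ('a,'l) struct"
  note st = amalg_step[OF KC BC KD BD ginj gB gD, folded D'_def]
  have KD': "in_KL ar D'" and uD': "univ D' = univ D \<union> g ` univ C" using st by blast+
  have indD: "\<And>Z. Z \<subseteq> univ D \<Longrightarrow> induced D' Z = induced D Z" using st by blast
  have spl: "\<And>X. X \<subseteq> univ D' \<Longrightarrow> delta \<alpha> (induced D' X) = delta \<alpha> (induced D (X \<inter> univ D))
        + delta \<alpha> (induced C (univ C \<inter> g -` X)) - delta \<alpha> (induced D (X \<inter> univ B))" using st by blast
  have iB: "induced B (univ B) = B" using KB by (rule KL_induced_univ)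
  have iC: "induced C (univ C) = C" using KC by (rule KL_induced_univ)
  have iD: "induced D (univ D) = D" using KD by (rule KL_induced_univ)
  have iD': "induced D' (univ D') = D'" using KD' by (rule KL_induced_univ)
  have iDB: "induced D (univ B) = B" using BD by (simp add: substr_def)
  have finD': "finite (univ D')" using KD' by (rule KL_fin)
  have BD': "substr B D'"
    unfolding substr_def using indD[OF BsD] iDB BsD uD' by auto
  have YB: "(univ C \<inter> g -` X) \<inter> univ B = X \<inter> univ B" for X
    using gB BsC by auto
  have CB_D: "delta \<alpha> (induced C (Z)) = delta \<alpha> (induced D Z)" if "Z \<subseteq> univ B" for Z
    using substr_ind[OF BC that] substr_ind[OF BD that] by simp
  have Ylow: "delta \<alpha> (induced C (univ C \<inter> g -` X)) \<ge> delta \<alpha> B - \<gamma>" if "univ B \<subseteq> X" for X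
  proof (cases "univ C \<inter> g -` X = univ C")
    case True then show ?thesis using iC P3 by simp
  next
    case False
    then have "univ C \<inter> g -` X \<subset> univ C" by blast
    moreover have "univ B \<subseteq> univ C \<inter> g -` X" using that gB BsC by auto
    ultimately have "delta \<alpha> (induced C (univ C \<inter> g -` X)) \<ge> delta \<alpha> B" by (intro P2)
    then show ?thesis using gpos by linarith
  qed
  have cardY: "card (univ C) \<le> card X" if "univ C \<inter> g -` X = univ C" "X \<subseteq> univ D'" for X
  proof -
    have "g ` univ C \<subseteq> X" using that(1) by blast
    then have "card (g ` univ C) \<le> card X" using that(2) finD' by (meson card_mono finite_subset)
    then show ?thesis using ginj by (simp add: card_image)
  qed
  have XB: "delta \<alpha> (induced D (X \<inter> univ B)) = delta \<alpha> B" if "univ B \<subseteq> X" for X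
  proof -
    have "X \<inter> univ B = univ B" using that by blast
    then show ?thesis using iDB by simp
  qed
  have ha: "\<forall>X. univ B \<subseteq> X \<and> X \<subseteq> univ D' \<longrightarrow> delta \<alpha> (induced D' X) \<ge> delta \<alpha> B - real (Suc n) * \<gamma>"
  proof (intro allI impI)
    fix X assume a: "univ B \<subseteq> X \<and> X \<subseteq> univ D'"
    have XD: "X \<subseteq> univ D'" using a by blast
    have aB: "univ B \<subseteq> X" using a by blast
    have "delta \<alpha> (induced D (X \<inter> univ D)) \<ge> delta \<alpha> B - real n * \<gamma>" using a BsD by (intro Da) auto
    moreover have "real (Suc n) * \<gamma> = real n * \<gamma> + \<gamma>" by (simp add: algebra_simps)
    ultimately show "delta \<alpha> (induced D' X) \<ge> delta \<alpha> B - real (Suc n) * \<gamma>"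
      using spl[OF XD] Ylow[OF aB] XB[OF aB] by linarith
  qed
  have ha': "\<forall>X. univ B \<subseteq> X \<and> X \<subset> univ D' \<longrightarrow> delta \<alpha> (induced D' X) \<ge> delta \<alpha> B - (real (Suc n) - 1) * \<gamma>"
  proof (intro allI impI)
    fix X assume a: "univ B \<subseteq> X \<and> X \<subset> univ D'"
    have XD: "X \<subseteq> univ D'" using a by blast
    show "delta \<alpha> (induced D' X) \<ge> delta \<alpha> B - (real (Suc n) - 1) * \<gamma>"
    proof (cases "X \<inter> univ D = univ D")
      case False
      then have XDs: "X \<inter> univ D \<subset> univ D" by blast
      have aB: "univ B \<subseteq> X" using a by blast
      have "delta \<alpha> (induced D (X \<inter> univ D)) \<ge> delta \<alpha> B - (real n - 1) * \<gamma>" using a BsD XDs by (intro Da') auto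
      then have h1: "delta \<alpha> (induced D (X \<inter> univ D)) \<ge> delta \<alpha> B - real n * \<gamma> + \<gamma>" by (simp add: algebra_simps)
      have e1: "delta \<alpha> B - (real (Suc n) - 1) * \<gamma> = delta \<alpha> B - real n * \<gamma>" by simp
      show ?thesis unfolding e1 using spl[OF XD] Ylow[OF aB] XB[OF aB] h1 by linarith
    next
      case True
      have "univ C \<inter> g -` X \<noteq> univ C"
      proof
        assume "univ C \<inter> g -` X = univ C"
        then have "g ` univ C \<subseteq> X" by blast
        moreover have "univ D \<subseteq> X" using True by blast
        ultimately have "univ D' \<subseteq> X" using uD' by simp
        moreover have "X \<subset> univ D'" using a by blast
        ultimately show False by blast
      qed
      then have "univ C \<inter> g -` X \<subset> univ C" by blast
      moreover have "univ B \<subseteq> univ C \<inter> g -` X" using a gB BsC by auto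
      ultimately have hC: "delta \<alpha> (induced C (univ C \<inter> g -` X)) \<ge> delta \<alpha> B" by (intro P2)
      have aB: "univ B \<subseteq> X" using a by blast
      have e1: "delta \<alpha> B - (real (Suc n) - 1) * \<gamma> = delta \<alpha> B - real n * \<gamma>" by simp
      have e2: "delta \<alpha> (induced D (X \<inter> univ D)) = delta \<alpha> D" using True iD by simp
      show ?thesis unfolding e1 using spl[OF XD] XB[OF aB] dD hC e2 by linarith
    qed
  qed
  have hb: "\<forall>X. X \<subseteq> univ D' \<and> \<not> univ B \<subseteq> X \<longrightarrow> delta \<alpha> (induced D' X) \<ge> delta \<alpha> (induced D' (X \<inter> univ B))"
  proof (intro allI impI)
    fix X assume a: "X \<subseteq> univ D' \<and> \<not> univ B \<subseteq> X"
    have XD: "X \<subseteq> univ D'" using a by blast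
    have XDB: "X \<inter> univ D \<inter> univ B = X \<inter> univ B" using BsD by blast
    have "\<not> univ B \<subseteq> X \<inter> univ D" using a by blast
    then have h1: "delta \<alpha> (induced D (X \<inter> univ D)) \<ge> delta \<alpha> (induced D (X \<inter> univ B))"
      using Db[of "X \<inter> univ D"] XDB by simp
    have nY: "\<not> univ B \<subseteq> univ C \<inter> g -` X" using YB[of X] a by blast
    then have "univ C \<inter> g -` X \<subset> univ C" using BsC by blast
    then have "delta \<alpha> (induced C (univ C \<inter> g -` X)) \<ge> delta \<alpha> (induced C ((univ C \<inter> g -` X) \<inter> univ B))"
      by (rule P4)
    then have h2: "delta \<alpha> (induced C (univ C \<inter> g -` X)) \<ge> delta \<alpha> (induced D (X \<inter> univ B))"
      unfolding YB using CB_D[of "X \<inter> univ B"] by simp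
    have "X \<inter> univ B \<subseteq> univ D" using BsD by blast
    then have "delta \<alpha> (induced D' (X \<inter> univ B)) = delta \<alpha> (induced D (X \<inter> univ B))" using indD by simp
    then show "delta \<alpha> (induced D' X) \<ge> delta \<alpha> (induced D' (X \<inter> univ B))"
      using spl[OF XD] h1 h2 by linarith
  qed
  have hd: "\<forall>X. univ B \<subseteq> X \<and> X \<subseteq> univ D' \<and> delta \<alpha> (induced D' X) < delta \<alpha> B \<longrightarrow> card (univ C) \<le> card X"
  proof (intro allI impI)
    fix X assume a: "univ B \<subseteq> X \<and> X \<subseteq> univ D' \<and> delta \<alpha> (induced D' X) < delta \<alpha> B"
    have XD: "X \<subseteq> univ D'" using a by blast
    have finX: "finite X" using a finD' finite_subset by blast
    show "card (univ C) \<le> card X"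
    proof (cases "delta \<alpha> (induced D (X \<inter> univ D)) < delta \<alpha> B")
      case True
      then have "card (univ C) \<le> card (X \<inter> univ D)" using a BsD by (intro Dd) auto
      moreover have "card (X \<inter> univ D) \<le> card X" using finX by (simp add: card_mono)
      ultimately show ?thesis by linarith
    next
      case False
      have aB: "univ B \<subseteq> X" and lt: "delta \<alpha> (induced D' X) < delta \<alpha> B" using a by blast+
      have "delta \<alpha> (induced C (univ C \<inter> g -` X)) < delta \<alpha> B"
        using spl[OF XD] XB[OF aB] lt False by linarith
      moreover have "univ B \<subseteq> univ C \<inter> g -` X" using a gB BsC by auto
      ultimately have "univ C \<inter> g -` X = univ C" using P2[of "univ C \<inter> g -` X"] by fastforce
      then show ?thesis using cardY a by blast
    qed
  qed
  have hdel: "delta \<alpha> D' = delta \<alpha> B - real (Suc n) * \<gamma>"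
  proof -
    have "univ D' \<inter> univ D = univ D" using uD' by blast
    moreover have "univ C \<inter> g -` univ D' = univ C" using uD' by blast
    moreover have aB: "univ B \<subseteq> univ D'" using uD' BsD by blast
    moreover have "real (Suc n) * \<gamma> = real n * \<gamma> + \<gamma>" by (simp add: algebra_simps)
    ultimately show ?thesis using spl[OF order_refl] iD' iD dD iC P3 XB[OF aB]
      by simp
  qed
  show ?case unfolding Inv_def
    by (rule exI[of _ D']) (use KD' BD' hdel ha ha' hb hd in blast)
qed

lemma drel_eq: "in_KL ar D \<Longrightarrow> substr A D \<Longrightarrow> delta_rel \<alpha> D (univ D) (univ A) = delta \<alpha> D - delta \<alpha> A"
proof -
  assume K: "in_KL ar D" and S: "substr A D"
  have "univ D \<union> univ A = univ D" using S by (auto simp: substr_def)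
  moreover have "induced D (univ A) = A" using S by (simp add: substr_def)
  ultimately show ?thesis unfolding delta_rel_def using KL_induced_univ[OF K] by simp
qed

theorem lemma3p32:
  fixes ar :: "'l::finite \<Rightarrow> nat" and \<alpha> :: "'l \<Rightarrow> real"
    and A B C :: "('a, 'l) struct"
  assumes inf: "infinite (UNIV :: 'a set)"
    and ar2: "\<forall>E. ar E \<ge> 2"
    and alpha_range: "\<forall>E. 0 < \<alpha> E \<and> \<alpha> E \<le> 1"
    and not_binary_one: "\<not> (\<forall>E. ar E = 2 \<and> \<alpha> E = 1)"
    and KA: "in_K_alpha ar \<alpha> A" and KB: "in_K_alpha ar \<alpha> B"
    and AB: "strong \<alpha> A B"
    and BC: "essential_minimal_pair ar \<alpha> B C"
  defines "\<gamma> \<equiv> - delta_rel \<alpha> C (univ C) (univ B)"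
  shows "(\<exists>D. in_K_alpha ar \<alpha> D \<and> substr B D \<and> strong \<alpha> A D \<and>
            0 \<le> delta_rel \<alpha> D (univ D) (univ A) \<and> delta_rel \<alpha> D (univ D) (univ A) < \<gamma> \<and>
            (\<forall>G. in_KL ar G \<and> minimal_pair \<alpha> B G \<and> card (univ G) < card (univ C)
                 \<longrightarrow> \<not> embeds_over ar B G D))
       \<and> (delta \<alpha> A \<ge> \<gamma> \<longrightarrow>
            (\<exists>D. in_K_alpha ar \<alpha> D \<and> substr B D \<and> essential_minimal_pair ar \<alpha> A D \<and>
                 delta_rel \<alpha> D (univ D) (univ A) < 0 \<and> delta_rel \<alpha> D (univ D) (univ A) \<ge> - \<gamma>))"
proof -
  have KAL: "in_KL ar A" using KA by (simp add: in_K_alpha_def)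
  have KBL: "in_KL ar B" using KB by (simp add: in_K_alpha_def)
  have KCa: "in_K_alpha ar \<alpha> C" and BCs: "substr B C" and mpBC: "minimal_pair \<alpha> B C"
    and essBC: "\<forall>X. X \<subset> univ C \<longrightarrow> delta_rel \<alpha> C X (X \<inter> univ B) \<ge> 0"
    using BC unfolding essential_minimal_pair_def by blast+
  have KCL: "in_KL ar C" using KCa by (simp add: in_K_alpha_def)
  have iA: "induced A (univ A) = A" using KAL by (rule KL_induced_univ)
  have iB: "induced B (univ B) = B" using KBL by (rule KL_induced_univ)
  have iC: "induced C (univ C) = C" using KCL by (rule KL_induced_univ)
  have iCB: "induced C (univ B) = B" using BCs by (simp add: substr_def)
  have BsC: "univ B \<subseteq> univ C" using BCs by (rule substr_univ)
  have ABs: "substr A B" using AB by (simp add: strong_def)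
  have AsB: "univ A \<subseteq> univ B" using ABs by (rule substr_univ)
  have ABlow: "\<And>X. univ A \<subseteq> X \<Longrightarrow> X \<subseteq> univ B \<Longrightarrow> delta \<alpha> A \<le> delta \<alpha> (induced B X)"
    using AB by (simp add: strong_def)
  have dA0: "delta \<alpha> A \<ge> 0" using KA iA unfolding in_K_alpha_def by (metis order_refl)
  have dB0: "\<And>X. X \<subseteq> univ B \<Longrightarrow> delta \<alpha> (induced B X) \<ge> 0" using KB unfolding in_K_alpha_def by blast
  have finB: "finite (univ B)" using KBL by (rule KL_fin)
  have P2: "\<And>Y. univ B \<subseteq> Y \<Longrightarrow> Y \<subset> univ C \<Longrightarrow> delta \<alpha> (induced C Y) \<ge> delta \<alpha> B"
  proof -
    fix Y assume Y: "univ B \<subseteq> Y" "Y \<subset> univ C"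
    then have "strong \<alpha> B (induced C Y)" using mpBC unfolding minimal_pair_def by blast
    then have "delta \<alpha> B \<le> delta \<alpha> (induced (induced C Y) Y)" using Y(1) unfolding strong_def by simp
    then show "delta \<alpha> (induced C Y) \<ge> delta \<alpha> B" by (simp add: induced_induced)
  qed
  have P3: "delta \<alpha> C = delta \<alpha> B - \<gamma>"
  proof -
    have "univ C \<union> univ B = univ C" using BsC by blast
    then show ?thesis unfolding \<gamma>_def delta_rel_def using iC iCB by simp
  qed
  have P4: "\<And>Y. Y \<subset> univ C \<Longrightarrow> delta \<alpha> (induced C Y) \<ge> delta \<alpha> (induced C (Y \<inter> univ B))"
  proof -
    fix Y assume "Y \<subset> univ C"
    then have "delta_rel \<alpha> C Y (Y \<inter> univ B) \<ge> 0" using essBC by blast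
    moreover have "Y \<union> (Y \<inter> univ B) = Y" by blast
    ultimately show "delta \<alpha> (induced C Y) \<ge> delta \<alpha> (induced C (Y \<inter> univ B))"
      unfolding delta_rel_def by simp
  qed
  have gpos: "\<gamma> > 0"
  proof -
    have "\<not> strong \<alpha> B C" using mpBC unfolding minimal_pair_def by blast
    then obtain X where X: "univ B \<subseteq> X" "X \<subseteq> univ C" "\<not> delta \<alpha> B \<le> delta \<alpha> (induced C X)"
      using BCs unfolding strong_def by blast
    have "X = univ C"
    proof (rule ccontr)
      assume "X \<noteq> univ C"
      then have "X \<subset> univ C" using X(2) by blast
      then show False using P2[OF X(1)] X(3) by blast
    qed
    then show ?thesis using X(3) iC P3 by simp
  qed
  define t where "t = delta \<alpha> B - delta \<alpha> A"
  have t0: "t \<ge> 0" using ABlow[OF AsB order_refl] iB unfolding t_def by simp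
  define n1 where "n1 = nat \<lfloor>t / \<gamma>\<rfloor>"
  have n1: "real n1 * \<gamma> \<le> t" "t < (real n1 + 1) * \<gamma>"
  proof -
    have q0: "t / \<gamma> \<ge> 0" using t0 gpos by simp
    then have rn: "real n1 = of_int \<lfloor>t / \<gamma>\<rfloor>" unfolding n1_def by simp
    have "real n1 \<le> t / \<gamma>" unfolding rn by (rule of_int_floor_le)
    then show "real n1 * \<gamma> \<le> t" using gpos by (simp add: pos_le_divide_eq)
    have "t / \<gamma> < real n1 + 1" unfolding rn by (rule real_of_int_floor_add_one_gt)
    then show "t < (real n1 + 1) * \<gamma>" using gpos by (simp add: pos_divide_less_eq)
  qed
  have inv: "\<And>n. \<exists>D. Inv ar \<alpha> B C \<gamma> n D"
    by (rule amalg_inv[OF inf KBL KCL BCs gpos P2 P3 P4])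
  have common: "in_KL ar D \<and> substr B D \<and> substr A D \<and> delta_rel \<alpha> D (univ D) (univ A) = t - real n * \<gamma> \<and>
      (\<forall>X. X \<subseteq> univ D \<and> \<not> univ B \<subseteq> X \<longrightarrow> delta \<alpha> (induced D X) \<ge> delta \<alpha> (induced B (X \<inter> univ B)))"
    if "Inv ar \<alpha> B C \<gamma> n D" for n D
  proof -
    note Dc = that[unfolded Inv_def]
    have KD: "in_KL ar D" by (rule Dc[THEN conjunct1])
    have BD: "substr B D" by (rule Dc[THEN conjunct2, THEN conjunct1])
    have dD: "delta \<alpha> D = delta \<alpha> B - real n * \<gamma>" by (rule Dc[THEN conjunct2, THEN conjunct2, THEN conjunct1])
    have Db: "\<And>X. X \<subseteq> univ D \<Longrightarrow> \<not> univ B \<subseteq> X \<Longrightarrow> delta \<alpha> (induced D X) \<ge> delta \<alpha> (induced D (X \<inter> univ B))"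
      using Dc[THEN conjunct2, THEN conjunct2, THEN conjunct2, THEN conjunct2, THEN conjunct2, THEN conjunct1] by blast
    have AD: "substr A D" by (rule substr_trans[OF ABs BD])
    have "delta_rel \<alpha> D (univ D) (univ A) = t - real n * \<gamma>"
      using drel_eq[OF KD AD] dD unfolding t_def by simp
    moreover have "\<forall>X. X \<subseteq> univ D \<and> \<not> univ B \<subseteq> X \<longrightarrow> delta \<alpha> (induced D X) \<ge> delta \<alpha> (induced B (X \<inter> univ B))"
    proof (intro allI impI)
      fix X assume a: "X \<subseteq> univ D \<and> \<not> univ B \<subseteq> X"
      have "induced D (X \<inter> univ B) = induced B (X \<inter> univ B)" by (rule substr_ind[OF BD]) blast
      moreover have "delta \<alpha> (induced D X) \<ge> delta \<alpha> (induced D (X \<inter> univ B))" using a by (intro Db) auto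
      ultimately show "delta \<alpha> (induced D X) \<ge> delta \<alpha> (induced B (X \<inter> univ B))" by simp
    qed
    ultimately show ?thesis using KD BD AD by blast
  qed
  have part1: "\<exists>D. in_K_alpha ar \<alpha> D \<and> substr B D \<and> strong \<alpha> A D \<and>
            0 \<le> delta_rel \<alpha> D (univ D) (univ A) \<and> delta_rel \<alpha> D (univ D) (univ A) < \<gamma> \<and>
            (\<forall>G. in_KL ar G \<and> minimal_pair \<alpha> B G \<and> card (univ G) < card (univ C)
                 \<longrightarrow> \<not> embeds_over ar B G D)"
  proof -
    obtain D where Di: "Inv ar \<alpha> B C \<gamma> n1 D" using inv by blast
    note cm = common[OF Di]
    have KD: "in_KL ar D" and BD: "substr B D" and AD: "substr A D"
      and dr: "delta_rel \<alpha> D (univ D) (univ A) = t - real n1 * \<gamma>"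
      and Db: "\<And>X. X \<subseteq> univ D \<Longrightarrow> \<not> univ B \<subseteq> X \<Longrightarrow> delta \<alpha> (induced D X) \<ge> delta \<alpha> (induced B (X \<inter> univ B))"
      using cm by blast+
    note Dc = Di[unfolded Inv_def]
    have Da: "\<And>X. univ B \<subseteq> X \<Longrightarrow> X \<subseteq> univ D \<Longrightarrow> delta \<alpha> (induced D X) \<ge> delta \<alpha> B - real n1 * \<gamma>"
      using Dc[THEN conjunct2, THEN conjunct2, THEN conjunct2, THEN conjunct1] by blast
    have Dd: "\<And>X. univ B \<subseteq> X \<Longrightarrow> X \<subseteq> univ D \<Longrightarrow> delta \<alpha> (induced D X) < delta \<alpha> B \<Longrightarrow> card (univ C) \<le> card X"
      using Dc[THEN conjunct2, THEN conjunct2, THEN conjunct2, THEN conjunct2, THEN conjunct2, THEN conjunct2] by blast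
    have lowA: "delta \<alpha> A \<le> delta \<alpha> (induced D X)" if "univ A \<subseteq> X" "X \<subseteq> univ D" for X
    proof (cases "univ B \<subseteq> X")
      case True
      then show ?thesis using Da[OF True that(2)] n1(1) unfolding t_def by linarith
    next
      case False
      have "delta \<alpha> A \<le> delta \<alpha> (induced B (X \<inter> univ B))" using that(1) AsB by (intro ABlow) auto
      then show ?thesis using Db[OF that(2) False] by linarith
    qed
    have KDa: "in_K_alpha ar \<alpha> D"
      unfolding in_K_alpha_def
    proof (intro conjI allI impI)
      show "in_KL ar D" by (rule KD)
      fix X assume X: "X \<subseteq> univ D"
      show "delta \<alpha> (induced D X) \<ge> 0"
      proof (cases "univ B \<subseteq> X")
        case True
        then show ?thesis using Da[OF True X] n1(1) dA0 unfolding t_def by linarith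
      next
        case False
        then show ?thesis using Db[OF X False] dB0[of "X \<inter> univ B"] by force
      qed
    qed
    have sAD: "strong \<alpha> A D" unfolding strong_def using AD lowA by blast
    have noemb: "\<not> embeds_over ar B G D" if G: "in_KL ar G \<and> minimal_pair \<alpha> B G \<and> card (univ G) < card (univ C)" for G
    proof
      assume "embeds_over ar B G D"
      then have "\<exists>f. inj_on f (univ G) \<and> f ` univ G \<subseteq> univ D \<and> (\<forall>b\<in>univ B. f b = b) \<and>
          (\<forall>E S. S \<subseteq> univ G \<and> card S = ar E \<longrightarrow> (S \<in> rel G E \<longleftrightarrow> f ` S \<in> rel D E))"
        by (simp only: embeds_over_def)
      then obtain f where f: "inj_on f (univ G) \<and> f ` univ G \<subseteq> univ D \<and> (\<forall>b\<in>univ B. f b = b) \<and>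
          (\<forall>E S. S \<subseteq> univ G \<and> card S = ar E \<longrightarrow> (S \<in> rel G E \<longleftrightarrow> f ` S \<in> rel D E))"
        by (rule exE)
      have finj: "inj_on f (univ G)" using f by (rule conjunct1)
      have fD: "f ` univ G \<subseteq> univ D" using f[THEN conjunct2] by (rule conjunct1)
      have fB: "\<forall>b\<in>univ B. f b = b" using f[THEN conjunct2, THEN conjunct2] by (rule conjunct1)
      have fr: "\<forall>E S. S \<subseteq> univ G \<and> card S = ar E \<longrightarrow> (S \<in> rel G E \<longleftrightarrow> f ` S \<in> rel D E)"
        using f[THEN conjunct2, THEN conjunct2] by (rule conjunct2)
      have KG: "in_KL ar G" using G by (rule conjunct1)
      have mpG: "minimal_pair \<alpha> B G" using G[THEN conjunct2] by (rule conjunct1)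
      have cG: "card (univ G) < card (univ C)" using G[THEN conjunct2] by (rule conjunct2)
      have BG: "substr B G" using mpG by (simp add: minimal_pair_def)
      have "\<not> strong \<alpha> B G" using mpG by (simp add: minimal_pair_def)
      then have "\<not> (\<forall>X. univ B \<subseteq> X \<and> X \<subseteq> univ G \<longrightarrow> delta \<alpha> B \<le> delta \<alpha> (induced G X))"
        using BG by (simp add: strong_def)
      then obtain X where X: "univ B \<subseteq> X" "X \<subseteq> univ G" "delta \<alpha> (induced G X) < delta \<alpha> B"
        by (auto simp: not_le)
      have rG: "rel G E \<subseteq> Pow (univ G)" for E using KG by (rule KL_rel)
      have eqd: "delta \<alpha> (induced D (f ` X)) = delta \<alpha> (induced G X)"
      proof (rule iso_delta[OF finj X(2)])
        fix E
        show "{S \<in> rel G E. S \<subseteq> X} \<subseteq> Pow (univ G)" using rG by blast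
        show "{S \<in> rel D E. S \<subseteq> f ` X} = (`) f ` {S \<in> rel G E. S \<subseteq> X}"
        proof (intro equalityI subsetI)
          fix S assume S: "S \<in> {S \<in> rel D E. S \<subseteq> f ` X}"
          define T where "T = X \<inter> f -` S"
          have fT: "f ` T = S" using S unfolding T_def by blast
          have TG: "T \<subseteq> univ G" using X(2) unfolding T_def by blast
          have TX: "T \<subseteq> X" unfolding T_def by blast
          have "card T = card S" using fT finj TG by (metis card_image inj_on_subset)
          also have "\<dots> = ar E" using S KL_card[OF KD] by blast
          finally have cT: "card T = ar E" .
          have iff: "T \<in> rel G E \<longleftrightarrow> f ` T \<in> rel D E" using fr TG cT by blast
          have "f ` T \<in> rel D E" using fT S by simp
          then have "T \<in> rel G E" using iff by simp
          then show "S \<in> (`) f ` {S \<in> rel G E. S \<subseteq> X}" using fT TX by blast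
        next
          fix S assume "S \<in> (`) f ` {S \<in> rel G E. S \<subseteq> X}"
          then obtain T where T: "T \<in> rel G E" "T \<subseteq> X" "S = f ` T" by blast
          have TG: "T \<subseteq> univ G" using T(1) rG by blast
          have cT: "card T = ar E" using KL_card[OF KG T(1)] .
          have iff: "T \<in> rel G E \<longleftrightarrow> f ` T \<in> rel D E" using fr TG cT by blast
          then have "f ` T \<in> rel D E" using T(1) by simp
          moreover have "f ` T \<subseteq> f ` X" using T(2) by (rule image_mono)
          ultimately show "S \<in> {S \<in> rel D E. S \<subseteq> f ` X}" using T(3) by simp
        qed
      qed
      have BfX: "univ B \<subseteq> f ` X"
      proof
        fix b assume b: "b \<in> univ B"
        then have "f b = b" using fB by blast
        moreover have "b \<in> X" using b X(1) by blast
        ultimately show "b \<in> f ` X" by (metis imageI)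
      qed
      have fXD: "f ` X \<subseteq> univ D" using fD X(2) by blast
      have "delta \<alpha> (induced D (f ` X)) < delta \<alpha> B" using eqd X(3) by simp
      then have "card (univ C) \<le> card (f ` X)" using Dd[OF BfX fXD] by simp
      moreover have "card (f ` X) = card X" using finj X(2) by (metis card_image inj_on_subset)
      moreover have "card X \<le> card (univ G)" using KL_fin[OF KG] X(2) by (rule card_mono)
      ultimately show False using cG by linarith
    qed
    show ?thesis
      apply (rule exI[of _ D])
      using KDa BD sAD dr n1 noemb by (simp add: algebra_simps)
  qed
  have part2: "delta \<alpha> A \<ge> \<gamma> \<longrightarrow>
            (\<exists>D. in_K_alpha ar \<alpha> D \<and> substr B D \<and> essential_minimal_pair ar \<alpha> A D \<and>
                 delta_rel \<alpha> D (univ D) (univ A) < 0 \<and> delta_rel \<alpha> D (univ D) (univ A) \<ge> - \<gamma>)"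
  proof
    assume dAg: "delta \<alpha> A \<ge> \<gamma>"
    obtain D where Di: "Inv ar \<alpha> B C \<gamma> (Suc n1) D" using inv by blast
    note cm = common[OF Di]
    have KD: "in_KL ar D" and BD: "substr B D" and AD: "substr A D"
      and dr: "delta_rel \<alpha> D (univ D) (univ A) = t - real (Suc n1) * \<gamma>"
      and Db: "\<And>X. X \<subseteq> univ D \<Longrightarrow> \<not> univ B \<subseteq> X \<Longrightarrow> delta \<alpha> (induced D X) \<ge> delta \<alpha> (induced B (X \<inter> univ B))"
      using cm by blast+
    note Dc = Di[unfolded Inv_def]
    have dD: "delta \<alpha> D = delta \<alpha> B - real (Suc n1) * \<gamma>" by (rule Dc[THEN conjunct2, THEN conjunct2, THEN conjunct1])
    have Da: "\<And>X. univ B \<subseteq> X \<Longrightarrow> X \<subseteq> univ D \<Longrightarrow> delta \<alpha> (induced D X) \<ge> delta \<alpha> B - real (Suc n1) * \<gamma>"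
      using Dc[THEN conjunct2, THEN conjunct2, THEN conjunct2, THEN conjunct1] by blast
    have Da': "\<And>X. univ B \<subseteq> X \<Longrightarrow> X \<subset> univ D \<Longrightarrow> delta \<alpha> (induced D X) \<ge> delta \<alpha> B - (real (Suc n1) - 1) * \<gamma>"
      using Dc[THEN conjunct2, THEN conjunct2, THEN conjunct2, THEN conjunct2, THEN conjunct1] by blast
    have sn: "real (Suc n1) * \<gamma> = real n1 * \<gamma> + \<gamma>" by (simp add: algebra_simps)
    have sn1: "delta \<alpha> B - (real (Suc n1) - 1) * \<gamma> = delta \<alpha> B - real n1 * \<gamma>" by simp
    have iD: "induced D (univ D) = D" using KD by (rule KL_induced_univ)
    have iDA: "induced D (univ A) = A" using AD by (simp add: substr_def)
    have KDa: "in_K_alpha ar \<alpha> D"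
      unfolding in_K_alpha_def
    proof (intro conjI allI impI)
      show "in_KL ar D" by (rule KD)
      fix X assume X: "X \<subseteq> univ D"
      show "delta \<alpha> (induced D X) \<ge> 0"
      proof (cases "univ B \<subseteq> X")
        case True
        then show ?thesis using Da[OF True X] n1(1) dAg sn unfolding t_def by linarith
      next
        case False
        then show ?thesis using Db[OF X False] dB0[of "X \<inter> univ B"] by force
      qed
    qed
    have lowA': "delta \<alpha> A \<le> delta \<alpha> (induced D X)" if "univ A \<subseteq> X" "X \<subset> univ D" for X
    proof (cases "univ B \<subseteq> X")
      case True
      then show ?thesis using Da'[OF True that(2)] n1(1) sn1 unfolding t_def by linarith
    next
      case False
      have "delta \<alpha> A \<le> delta \<alpha> (induced B (X \<inter> univ B))" using that(1) AsB by (intro ABlow) auto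
      then show ?thesis using Db[OF _ False] that(2) by force
    qed
    have dDlt: "delta \<alpha> D < delta \<alpha> A" using dD n1(2) sn unfolding t_def by (simp add: algebra_simps)
    have mp: "minimal_pair \<alpha> A D"
      unfolding minimal_pair_def
    proof (intro conjI allI impI)
      show "substr A D" by (rule AD)
      fix X assume X: "univ A \<subseteq> X \<and> X \<subset> univ D"
      show "strong \<alpha> A (induced D X)"
        unfolding strong_def
      proof (intro conjI allI impI)
        have "induced (induced D X) (univ A) = A" using X iDA by (simp add: induced_induced)
        then show "substr A (induced D X)" unfolding substr_def using X by simp
        fix Y assume Y: "univ A \<subseteq> Y \<and> Y \<subseteq> univ (induced D X)"
        then have "induced (induced D X) Y = induced D Y" by (simp add: induced_induced)
        moreover have "Y \<subset> univ D" using X Y by auto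
        ultimately show "delta \<alpha> A \<le> delta \<alpha> (induced (induced D X) Y)" using lowA' Y by simp
      qed
    next
      show "\<not> strong \<alpha> A D"
      proof
        assume "strong \<alpha> A D"
        then have "delta \<alpha> A \<le> delta \<alpha> (induced D (univ D))" unfolding strong_def using AD by (simp add: substr_def)
        then show False using iD dDlt by simp
      qed
    qed
    have ess: "\<forall>X. X \<subset> univ D \<longrightarrow> delta_rel \<alpha> D X (X \<inter> univ A) \<ge> 0"
    proof (intro allI impI)
      fix X assume X: "X \<subset> univ D"
      have XA: "X \<union> (X \<inter> univ A) = X" by blast
      show "delta_rel \<alpha> D X (X \<inter> univ A) \<ge> 0"
      proof (cases "univ B \<subseteq> X")
        case True
        then have "X \<inter> univ A = univ A" using AsB by blast
        then show ?thesis unfolding delta_rel_def XA using lowA'[OF _ X] True AsB iDA by auto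
      next
        case False
        let ?Z = "X \<inter> univ B"
        have fZ: "finite ?Z" using finB by simp
        have fA: "finite (univ A)" using AsB finB finite_subset by blast
        have sm: "delta \<alpha> (induced B (?Z \<union> univ A)) + delta \<alpha> (induced B (?Z \<inter> univ A)) \<le> delta \<alpha> (induced B ?Z) + delta \<alpha> (induced B (univ A))"
          by (rule submod[OF _ fZ fA]) (use alpha_range in \<open>simp add: less_imp_le\<close>)
        have "delta \<alpha> A \<le> delta \<alpha> (induced B (?Z \<union> univ A))" using AsB by (intro ABlow) auto
        moreover have "induced B (univ A) = A" using ABs by (simp add: substr_def)
        moreover have "?Z \<inter> univ A = X \<inter> univ A" using AsB by blast
        moreover have "induced D (X \<inter> univ A) = induced B (X \<inter> univ A)" by (rule substr_ind[OF BD]) (use AsB in blast)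
        ultimately have "delta \<alpha> (induced B ?Z) \<ge> delta \<alpha> (induced D (X \<inter> univ A))" using sm by simp
        moreover have "delta \<alpha> (induced D X) \<ge> delta \<alpha> (induced B ?Z)" using Db[OF _ False] X by blast
        ultimately show ?thesis unfolding delta_rel_def XA by simp
      qed
    qed
    have dApos: "delta \<alpha> A > 0" using dAg gpos by simp
    have "essential_minimal_pair ar \<alpha> A D"
      unfolding essential_minimal_pair_def using KA dApos KDa AD mp ess by blast
    moreover have "delta_rel \<alpha> D (univ D) (univ A) < 0" "delta_rel \<alpha> D (univ D) (univ A) \<ge> - \<gamma>"
      using dr n1 sn by (simp_all add: algebra_simps)
    ultimately show "\<exists>D. in_K_alpha ar \<alpha> D \<and> substr B D \<and> essential_minimal_pair ar \<alpha> A D \<and>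
                 delta_rel \<alpha> D (univ D) (univ A) < 0 \<and> delta_rel \<alpha> D (univ D) (univ A) \<ge> - \<gamma>"
      using KDa BD by blast
  qed
  show ?thesis using part1 part2 by blast
qed

end
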